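(* In the reduction instance $NTP([a_j]_{j\in A},W)$, there exists $A'\subseteq A$ such that the block schedule $S(A')$ is an optimal schedule.
   Context: Reduction instance. Let $N\ge1$, $A=\{1,\dots,N\}$, positive integers $a_1,\dots,a_N$, positive integer $W\le\sum_{j\in A}a_j$. Set $M=N+\sum_{j\in A}a_j+1$, employees $\mathcal E=\{1,\dots,M\}$ (smaller index = more senior). For $k\in A$: $i_k=k+\sum_{j=1}^{k-1}a_j$ (critical employees), $\mathcal E^S_k=\{i: i_k<i\le i_k+a_k\}$ (stable block). Response delays: $r_{i_k}=\sum_{j=1}^{k}a_j$; for $i\in\mathcal E^S_k$, $r_i=\sum_{j=1}^{k-1}a_j$; $r_M=\sum_{j\in A}a_j$. Let $C^*_0=2\sum_j a_j$ and $H=C^*_0-W$. A schedule $S=(s_i,e_i)_{i\in\mathcal E}$ has $s_i\ge0$, $e_i=s_i+r_i$; it is feasible if $s_1\le\dots\le s_M$ and $e_i\le H$ for all $i$. $b_i=|\{j: i<j,\ e_j<e_i\}|$, $B(S)=\sum_i b_i$. A schedule is optimal if it is feasible and minimizes $B(S)$ among feasible schedules. Block schedule $S(A')$, $A'\subseteq A$: $s_1=0$; for $i\ge2$, $s_i=s_{i_k}+a_k$ if $i=i_k+1$ for some $k\in A\setminus A'$, and $s_i=s_{i-1}$ otherwise; $e_i=s_i+r_i$. *)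

theory Defs
  imports Main Complex_Main
begin

(* Instance parameters: N (number of items, A = {1..N}), sizes a :: nat => nat (a j for j in A),
   and W. Employees are 1..M. *)

definition total :: "nat \<Rightarrow> (nat \<Rightarrow> nat) \<Rightarrow> nat" where
  "total N a = (\<Sum>j\<in>{1..N}. a j)"

definition numEmp :: "nat \<Rightarrow> (nat \<Rightarrow> nat) \<Rightarrow> nat" where
  "numEmp N a = N + total N a + 1"

definition crit :: "(nat \<Rightarrow> nat) \<Rightarrow> nat \<Rightarrow> nat" where
  "crit a k = k + (\<Sum>j\<in>{1..<k}. a j)"

definition stable :: "(nat \<Rightarrow> nat) \<Rightarrow> nat \<Rightarrow> nat set" where
  "stable a k = {i. crit a k < i \<and> i \<le> crit a k + a k}"

definition resp :: "nat \<Rightarrow> (nat \<Rightarrow> nat) \<Rightarrow> nat \<Rightarrow> nat" where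
  "resp N a i =
     (if i = numEmp N a then total N a
      else if (\<exists>k\<in>{1..N}. i = crit a k)
        then (\<Sum>j\<in>{1..(THE k. k \<in> {1..N} \<and> i = crit a k)}. a j)
      else (\<Sum>j\<in>{1..<(THE k. k \<in> {1..N} \<and> i \<in> stable a k)}. a j))"

definition horizon :: "nat \<Rightarrow> (nat \<Rightarrow> nat) \<Rightarrow> nat \<Rightarrow> real" where
  "horizon N a W = 2 * real (total N a) - real W"

definition endt :: "nat \<Rightarrow> (nat \<Rightarrow> nat) \<Rightarrow> (nat \<Rightarrow> real) \<Rightarrow> nat \<Rightarrow> real" where
  "endt N a s i = s i + real (resp N a i)"

definition feasible :: "nat \<Rightarrow> (nat \<Rightarrow> nat) \<Rightarrow> nat \<Rightarrow> (nat \<Rightarrow> real) \<Rightarrow> bool" where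
  "feasible N a W s \<longleftrightarrow>
     (\<forall>i\<in>{1..numEmp N a}. 0 \<le> s i) \<and>
     (\<forall>i j. 1 \<le> i \<longrightarrow> i \<le> j \<longrightarrow> j \<le> numEmp N a \<longrightarrow> s i \<le> s j) \<and>
     (\<forall>i\<in>{1..numEmp N a}. endt N a s i \<le> horizon N a W)"

definition bcount :: "nat \<Rightarrow> (nat \<Rightarrow> nat) \<Rightarrow> (nat \<Rightarrow> real) \<Rightarrow> nat \<Rightarrow> nat" where
  "bcount N a s i = card {j\<in>{1..numEmp N a}. i < j \<and> endt N a s j < endt N a s i}"

definition Bval :: "nat \<Rightarrow> (nat \<Rightarrow> nat) \<Rightarrow> (nat \<Rightarrow> real) \<Rightarrow> nat" where
  "Bval N a s = (\<Sum>i\<in>{1..numEmp N a}. bcount N a s i)"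

definition optimal :: "nat \<Rightarrow> (nat \<Rightarrow> nat) \<Rightarrow> nat \<Rightarrow> (nat \<Rightarrow> real) \<Rightarrow> bool" where
  "optimal N a W s \<longleftrightarrow> feasible N a W s \<and>
     (\<forall>s'. feasible N a W s' \<longrightarrow> Bval N a s \<le> Bval N a s')"

fun blk :: "nat \<Rightarrow> (nat \<Rightarrow> nat) \<Rightarrow> nat set \<Rightarrow> nat \<Rightarrow> nat" where
  "blk N a A' 0 = 0"
| "blk N a A' (Suc n) =
     (if n = 0 then 0
      else if (\<exists>k\<in>{1..N} - A'. Suc n = crit a k + 1)
        then blk N a A' n + a (THE k. k \<in> {1..N} - A' \<and> Suc n = crit a k + 1)
      else blk N a A' n)"

definition blockSched :: "nat \<Rightarrow> (nat \<Rightarrow> nat) \<Rightarrow> nat set \<Rightarrow> nat \<Rightarrow> real" where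
  "blockSched N a A' i = real (blk N a A' i)"

end

theory Submission imports Defs begin

lemma crit_Suc: "k \<ge> 1 \<Longrightarrow> crit a (Suc k) = crit a k + a k + 1"
  unfolding crit_def by (simp add: atLeastLessThanSuc)

lemma crit_smono: "strict_mono (crit a)"
unfolding strict_mono_Suc_iff
proof
  fix k
  have "(\<Sum>j\<in>{1..<k}. a j) \<le> (\<Sum>j\<in>{1..<Suc k}. a j)"
    by (rule sum_mono2) auto
  then show "crit a k < crit a (Suc k)" unfolding crit_def by simp
qed

lemma crit_M: "crit a (Suc N) = numEmp N a"
  unfolding crit_def numEmp_def total_def
  by (simp add: atLeastLessThanSuc_atLeastAtMost)

lemma crit_ge: "k \<le> crit a k" unfolding crit_def by simp

lemma crit_less_iff: "crit a k < crit a k' \<longleftrightarrow> k < k'"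
  using crit_smono strict_mono_less by blast
lemma crit_le_iff: "crit a k \<le> crit a k' \<longleftrightarrow> k \<le> k'"
  using crit_smono strict_mono_less_eq by blast
lemma crit_eq_iff: "crit a k = crit a k' \<longleftrightarrow> k = k'"
  using crit_smono strict_mono_eq by blast

lemma block_exists_gen:
  "1 \<le> i \<Longrightarrow> i < crit a (Suc n) \<Longrightarrow> \<exists>k\<in>{1..n}. crit a k \<le> i \<and> i < crit a (Suc k)"
proof (induction n)
  case 0
  then show ?case unfolding crit_def by simp
next
  case (Suc n)
  show ?case
  proof (cases "i < crit a (Suc n)")
    case True
    then show ?thesis using Suc by force
  next
    case False
    then show ?thesis using Suc.prems by force
  qed
qed

lemma not_crit_between:
  "crit a k < i \<Longrightarrow> i < crit a (Suc k) \<Longrightarrow> i \<noteq> crit a k'"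
proof
  assume h: "crit a k < i" "i < crit a (Suc k)" "i = crit a k'"
  then have "k < k'" "k' < Suc k" using crit_less_iff by metis+
  then show False by simp
qed

lemma stable_between:
  "k \<ge> 1 \<Longrightarrow> i \<in> stable a k \<Longrightarrow> crit a k < i \<and> i < crit a (Suc k)"
  unfolding stable_def using crit_Suc[of k a] by auto

lemma stable_unique:
  "k \<ge> 1 \<Longrightarrow> k' \<ge> 1 \<Longrightarrow> i \<in> stable a k \<Longrightarrow> i \<in> stable a k' \<Longrightarrow> k = k'"
proof -
  assume h: "k \<ge> 1" "k' \<ge> 1" "i \<in> stable a k" "i \<in> stable a k'"
  then have b1: "crit a k < i" "i < crit a (Suc k)" and b2: "crit a k' < i" "i < crit a (Suc k')"
    using stable_between by blast+
  from b1 b2 have "crit a k < crit a (Suc k')" "crit a k' < crit a (Suc k)" by linarith+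
  then have "k < Suc k'" "k' < Suc k" using crit_less_iff by blast+
  then show "k = k'" by simp
qed

lemma card_stable: "card (stable a k) = a k"
proof -
  have "stable a k = {crit a k <.. crit a k + a k}" unfolding stable_def by auto
  then show ?thesis by simp
qed

lemma resp_crit:
  assumes "k \<in> {1..N}"
  shows "resp N a (crit a k) = (\<Sum>j\<in>{1..k}. a j)"
proof -
  have "crit a k < crit a (Suc N)" using assms crit_less_iff by auto
  then have ne: "crit a k \<noteq> numEmp N a" using crit_M[of a N] by simp
  have "(THE k'. k' \<in> {1..N} \<and> crit a k = crit a k') = k"
    using assms by (rule_tac the_equality) (auto simp: crit_eq_iff)
  then show ?thesis unfolding resp_def using ne assms by auto
qed

lemma resp_stable:
  assumes "k \<in> {1..N}" "i \<in> stable a k"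
  shows "resp N a i = (\<Sum>j\<in>{1..<k}. a j)"
proof -
  have b: "crit a k < i" "i < crit a (Suc k)" using assms stable_between by auto
  have "crit a (Suc k) \<le> crit a (Suc N)" using assms crit_le_iff by auto
  then have ne: "i \<noteq> numEmp N a" using crit_M[of a N] b by simp
  have nc: "\<not> (\<exists>k'\<in>{1..N}. i = crit a k')" using not_crit_between[OF b] by blast
  have "(THE k'. k' \<in> {1..N} \<and> i \<in> stable a k') = k"
    using assms by (rule_tac the_equality) (auto intro: stable_unique)
  then show ?thesis unfolding resp_def using ne nc by auto
qed

lemma resp_M: "resp N a (numEmp N a) = total N a"
  unfolding resp_def by simp


lemma Psplit: "(k::nat) \<ge> 1 \<Longrightarrow> (\<Sum>j\<in>{1..k}. a j) = (\<Sum>j\<in>{1..<k}. a j) + (a k::nat)"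
  using sum.atLeastLessThan_Suc[of 1 k a, symmetric] by (simp add: atLeastLessThanSuc_atLeastAtMost)

lemma crit_in_range: "k \<in> {1..N} \<Longrightarrow> crit a k \<in> {1..numEmp N a}"
proof -
  assume k: "k \<in> {1..N}"
  have "crit a k < crit a (Suc N)" using k crit_less_iff by auto
  moreover have "1 \<le> crit a k" using crit_ge[of k a] k by auto
  ultimately show ?thesis using crit_M[of a N] by auto
qed

lemma stable_in_range: "k \<in> {1..N} \<Longrightarrow> j \<in> stable a k \<Longrightarrow> j \<in> {1..numEmp N a} \<and> crit a k < j \<and> j < crit a (Suc k)"
proof -
  assume k: "k \<in> {1..N}" and j: "j \<in> stable a k"
  have b: "crit a k < j" "j < crit a (Suc k)" using stable_between k j by auto
  have "crit a (Suc k) \<le> crit a (Suc N)" using k crit_le_iff by auto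
  then show ?thesis using b crit_M[of a N] by auto
qed

lemma bcount_crit_ge:
  assumes k: "k\<in>{1..N}" and h: "\<forall>j\<in>stable a k. s j < s (crit a k) + real (a k)"
  shows "a k \<le> bcount N a s (crit a k)"
proof -
  have sub: "stable a k \<subseteq> {j\<in>{1..numEmp N a}. crit a k < j \<and> endt N a s j < endt N a s (crit a k)}"
  proof
    fix j assume j: "j \<in> stable a k"
    have r: "j \<in> {1..numEmp N a}" "crit a k < j" using stable_in_range[OF k j] by auto
    have e1: "endt N a s j = s j + real (\<Sum>j\<in>{1..<k}. a j)"
      unfolding endt_def using resp_stable[OF k j] by simp
    have e2: "endt N a s (crit a k) = s (crit a k) + real (\<Sum>j\<in>{1..<k}. a j) + real (a k)"
      unfolding endt_def using resp_crit[OF k] Psplit[of k a] k by simp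
    have "endt N a s j < endt N a s (crit a k)" using e1 e2 h j by simp
    then show "j \<in> {j\<in>{1..numEmp N a}. crit a k < j \<and> endt N a s j < endt N a s (crit a k)}"
      using r by simp
  qed
  have "card (stable a k) \<le> bcount N a s (crit a k)"
    unfolding bcount_def by (rule card_mono[OF _ sub]) simp
  then show ?thesis using card_stable by simp
qed

lemma Bval_ge:
  assumes sub: "A2 \<subseteq> {1..N}" and h: "\<forall>k\<in>A2. \<forall>j\<in>stable a k. s j < s (crit a k) + real (a k)"
  shows "sum a A2 \<le> Bval N a s"
proof -
  have fin: "finite A2" using sub finite_subset by blast
  have "sum a A2 \<le> (\<Sum>k\<in>A2. bcount N a s (crit a k))"
    using sub h bcount_crit_ge by (intro sum_mono) blast
  also have "\<dots> = sum (bcount N a s) (crit a ` A2)"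
    using sum.reindex[of "crit a" A2 "bcount N a s"] strict_mono_imp_inj_on[OF crit_smono]
    by (simp add: inj_on_subset)
  also have "\<dots> \<le> sum (bcount N a s) {1..numEmp N a}"
  proof (rule sum_mono2)
    show "crit a ` A2 \<subseteq> {1..numEmp N a}" using sub crit_in_range by blast
  qed auto
  finally show ?thesis unfolding Bval_def .
qed

lemma sM_ge:
  assumes fe: "feasible N a W s"
    and h: "\<forall>k\<in>{1..N} - A2. \<exists>j\<in>stable a k. s (crit a k) + real (a k) \<le> s j"
  shows "real (sum a ({1..N} - A2)) \<le> s (numEmp N a)"
proof -
  have mono: "\<And>i j. 1 \<le> i \<Longrightarrow> i \<le> j \<Longrightarrow> j \<le> numEmp N a \<Longrightarrow> s i \<le> s j"
    using fe unfolding feasible_def by blast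
  have "m \<le> N \<Longrightarrow> s (crit a 1) + real (sum a ({1..m} - A2)) \<le> s (crit a (Suc m))" for m
  proof (induction m)
    case 0
    then show ?case by simp
  next
    case (Suc m)
    then have IH: "s (crit a 1) + real (sum a ({1..m} - A2)) \<le> s (crit a (Suc m))" by simp
    have "crit a (Suc (Suc m)) \<le> crit a (Suc N)" using Suc.prems crit_le_iff by simp
    then have cM: "crit a (Suc (Suc m)) \<le> numEmp N a" using crit_M[of a N] by simp
    have c1: "1 \<le> crit a (Suc m)" using crit_ge[of "Suc m" a] by simp
    have cle: "crit a (Suc m) \<le> crit a (Suc (Suc m))" using crit_le_iff by simp
    have km: "Suc m \<in> {1..N}" using Suc.prems by simp
    show ?case
    proof (cases "Suc m \<in> A2")
      case True
      then have "{1..Suc m} - A2 = {1..m} - A2" by (simp add: atLeastAtMostSuc_conv)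
      then show ?thesis using IH mono[OF c1 cle cM] by simp
    next
      case False
      then have eq: "{1..Suc m} - A2 = insert (Suc m) ({1..m} - A2)" by (simp add: atLeastAtMostSuc_conv insert_Diff_if)
      obtain j where j: "j \<in> stable a (Suc m)" "s (crit a (Suc m)) + real (a (Suc m)) \<le> s j"
        using h km False by blast
      have jr: "j \<in> {1..numEmp N a}" "j < crit a (Suc (Suc m))" using stable_in_range[OF km j(1)] by auto
      have "s j \<le> s (crit a (Suc (Suc m)))" using mono[of j "crit a (Suc (Suc m))"] jr cM by simp
      then show ?thesis using IH j eq by simp
    qed
  qed
  from this[of N] have "s (crit a 1) + real (sum a ({1..N} - A2)) \<le> s (numEmp N a)"
    using crit_M[of a N] by simp
  moreover have "crit a 1 = 1" unfolding crit_def by simp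
  moreover have "1 \<in> {1..numEmp N a}" unfolding numEmp_def by simp
  moreover have "0 \<le> s 1" using fe calculation(3) unfolding feasible_def by blast
  ultimately show ?thesis by simp
qed


lemma blk_closed: "blk N a A' i = sum a {k\<in>{1..N}-A'. crit a k < i}"
proof (induction i)
  case 0
  show ?case by simp
next
  case (Suc n)
  show ?case
  proof (cases "n = 0")
    case True
    have c1: "\<And>k. 1 \<le> k \<Longrightarrow> 1 \<le> crit a k" using crit_ge le_trans by blast
    have "{k\<in>{1..N}-A'. crit a k < Suc n} = {}"
    proof (rule equals0I)
      fix k assume "k \<in> {k\<in>{1..N}-A'. crit a k < Suc n}"
      then have "1 \<le> k" "crit a k < 1" using True by auto
      then show False using c1 by force
    qed
    moreover have "blk N a A' (Suc n) = 0" using True by simp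
    ultimately show ?thesis by (metis sum.empty)
  next
    case False
    have split: "{k\<in>{1..N}-A'. crit a k < Suc n} = {k\<in>{1..N}-A'. crit a k < n} \<union> {k\<in>{1..N}-A'. crit a k = n}"
      by (auto simp: less_Suc_eq)
    show ?thesis
    proof (cases "\<exists>k\<in>{1..N}-A'. Suc n = crit a k + 1")
      case True
      then obtain k where k: "k\<in>{1..N}-A'" "n = crit a k" by auto
      have the: "(THE k. k \<in> {1..N} - A' \<and> Suc n = crit a k + 1) = k"
        using k by (intro the_equality) (auto simp: crit_eq_iff)
      have s2: "{k\<in>{1..N}-A'. crit a k = n} = {k}" using k by (auto simp: crit_eq_iff)
      have "sum a {k\<in>{1..N}-A'. crit a k < Suc n} = sum a {k\<in>{1..N}-A'. crit a k < n} + a k"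
        unfolding split s2 using k by (subst sum.union_disjoint) auto
      moreover have "blk N a A' (Suc n) = blk N a A' n + a k"
        using False True the by (simp only: blk.simps if_False if_True)
      ultimately show ?thesis using Suc.IH by simp
    next
      case F2: False
      then have "{k\<in>{1..N}-A'. crit a k = n} = {}" by auto
      moreover have "blk N a A' (Suc n) = blk N a A' n"
        using False F2 by (simp only: blk.simps if_False if_True)
      ultimately show ?thesis using Suc.IH split by (metis Un_empty_right)
    qed
  qed
qed

definition Rs :: "nat \<Rightarrow> (nat \<Rightarrow> nat) \<Rightarrow> nat set \<Rightarrow> nat \<Rightarrow> nat" where
  "Rs N a A' m = sum a {k\<in>{1..N}-A'. k < m}"

lemma Rs_mono: "m \<le> m' \<Longrightarrow> Rs N a A' m \<le> Rs N a A' m'"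
  unfolding Rs_def by (rule sum_mono2) auto

lemma Rs_Suc: "Rs N a A' (Suc k) = Rs N a A' k + (if k \<in> {1..N}-A' then a k else 0)"
proof (cases "k \<in> {1..N}-A'")
  case True
  then have "{k'\<in>{1..N}-A'. k' < Suc k} = insert k {k'\<in>{1..N}-A'. k' < k}" by auto
  then show ?thesis unfolding Rs_def using True by simp
next
  case False
  then have "{k'\<in>{1..N}-A'. k' < Suc k} = {k'\<in>{1..N}-A'. k' < k}" by (auto simp: less_Suc_eq)
  moreover have "(if k\<in>{1..N}-A' then a k else 0) = 0" using False by (simp only: if_False)
  ultimately show ?thesis unfolding Rs_def by (simp only: add_0_right)
qed

lemma bs_crit: "blockSched N a A' (crit a k) = real (Rs N a A' k)"
  unfolding blockSched_def Rs_def blk_closed by (simp add: crit_less_iff)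

lemma bs_block: "crit a k < i \<Longrightarrow> i \<le> crit a (Suc k) \<Longrightarrow> blockSched N a A' i = real (Rs N a A' (Suc k))"
proof -
  assume h: "crit a k < i" "i \<le> crit a (Suc k)"
  have "{k'\<in>{1..N}-A'. crit a k' < i} = {k'\<in>{1..N}-A'. k' < Suc k}"
  proof (intro Collect_cong conj_cong refl iffI)
    fix k' assume "crit a k' < i"
    then have "crit a k' < crit a (Suc k)" using h by simp
    then show "k' < Suc k" using crit_less_iff by blast
  next
    fix k' assume "k' < Suc k"
    then have "crit a k' \<le> crit a k" using crit_le_iff by simp
    then show "crit a k' < i" using h by simp
  qed
  then show ?thesis unfolding blockSched_def Rs_def blk_closed by simp
qed

lemma bs_M: "blockSched N a A' (numEmp N a) = real (Rs N a A' (Suc N))"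
  using bs_crit[of N a A' "Suc N"] crit_M[of a N] by simp

lemma block_cases: "k \<ge> 1 \<Longrightarrow> crit a k \<le> i \<Longrightarrow> i < crit a (Suc k) \<Longrightarrow> i = crit a k \<or> i \<in> stable a k"
  unfolding stable_def using crit_Suc[of k a] by auto

lemma resp_le:
  assumes "i \<in> {1..numEmp N a}"
  shows "resp N a i \<le> total N a"
proof (cases "i = numEmp N a")
  case True
  then show ?thesis using resp_M by simp
next
  case False
  then have "i < crit a (Suc N)" using assms crit_M[of a N] by simp
  then obtain k where k: "k\<in>{1..N}" "crit a k \<le> i" "i < crit a (Suc k)"
    using block_exists_gen[of i a N] assms by auto
  have s1: "(\<Sum>j\<in>{1..k}. a j) \<le> total N a" unfolding total_def using k by (intro sum_mono2) auto
  have s2: "(\<Sum>j\<in>{1..<k}. a j) \<le> total N a" unfolding total_def using k by (intro sum_mono2) auto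
  from block_cases[of k a i] k show ?thesis
    using resp_crit[OF k(1)] resp_stable[OF k(1)] s1 s2 by auto
qed

lemma sum_sub_mono: "(\<And>k. k \<in> {1..N}-A' \<Longrightarrow> P k \<Longrightarrow> Q k) \<Longrightarrow>
   sum a {k\<in>{1..N}-A'. P k} \<le> sum (a::nat\<Rightarrow>nat) {k\<in>{1..N}-A'. Q k}"
proof (rule sum_mono2)
  show "finite {k\<in>{1..N}-A'. Q k}" by (rule finite_subset[of _ "{1..N}"]) auto
qed auto

lemma feasible_block:
  assumes "real (sum a ({1..N}-A')) \<le> real (total N a) - real W"
  shows "feasible N a W (blockSched N a A')"
  unfolding feasible_def
proof (intro conjI ballI allI impI)
  fix i assume "i \<in> {1..numEmp N a}"
  show "0 \<le> blockSched N a A' i" unfolding blockSched_def by simp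
next
  fix i j :: nat assume "1 \<le> i" "i \<le> j" "j \<le> numEmp N a"
  then have "sum a {k\<in>{1..N}-A'. crit a k < i} \<le> sum a {k\<in>{1..N}-A'. crit a k < j}"
    by (intro sum_sub_mono) simp
  then show "blockSched N a A' i \<le> blockSched N a A' j"
    unfolding blockSched_def blk_closed by (simp del: of_nat_sum)
next
  fix i assume i: "i \<in> {1..numEmp N a}"
  have "sum a {k\<in>{1..N}-A'. crit a k < i} \<le> sum a {k\<in>{1..N}-A'. True}"
    by (intro sum_sub_mono) simp
  also have "{k\<in>{1..N}-A'. True} = {1..N}-A'" by blast
  finally have "sum a {k\<in>{1..N}-A'. crit a k < i} \<le> sum a ({1..N}-A')" .
  then have "blockSched N a A' i \<le> real (sum a ({1..N}-A'))"
    unfolding blockSched_def blk_closed by (simp del: of_nat_sum)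
  moreover have "real (resp N a i) \<le> real (total N a)" using resp_le[OF i] by simp
  ultimately show "endt N a (blockSched N a A') i \<le> horizon N a W"
    unfolding endt_def horizon_def using assms by simp
qed


lemma E1: "k \<in> {1..N} \<Longrightarrow> endt N a (blockSched N a A') (crit a k)
   = real (Rs N a A' k) + real (\<Sum>j\<in>{1..<k}. a j) + real (a k)"
  unfolding endt_def bs_crit using resp_crit[of k N a] Psplit[of k a] by simp

lemma E2: "k \<in> {1..N} \<Longrightarrow> i \<in> stable a k \<Longrightarrow> endt N a (blockSched N a A') i
   = real (Rs N a A' (Suc k)) + real (\<Sum>j\<in>{1..<k}. a j)"
proof -
  assume k: "k \<in> {1..N}" and i: "i \<in> stable a k"
  have b: "crit a k < i" "i < crit a (Suc k)" using stable_between k i by auto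
  show ?thesis unfolding endt_def using bs_block[of a k i N A'] b resp_stable[OF k i] by simp
qed

lemma E3: "endt N a (blockSched N a A') (numEmp N a) = real (Rs N a A' (Suc N)) + real (total N a)"
  unfolding endt_def bs_M resp_M by simp

lemma Rs_mono_r: "m \<le> m' \<Longrightarrow> real (Rs N a A' m) \<le> real (Rs N a A' m')"
  using Rs_mono by simp

lemma Pm_mono: "(m::nat) \<le> m' \<Longrightarrow> (\<Sum>j\<in>{1..<m}. a j) \<le> (\<Sum>j\<in>{1..<m'}. (a j::nat))"
  by (rule sum_mono2) auto

lemma core:
  assumes i: "i \<in> {1..numEmp N a}" and j: "j \<in> {1..numEmp N a}" and ij: "i < j"
    and lt: "endt N a (blockSched N a A') j < endt N a (blockSched N a A') i"
  shows "\<exists>k\<in>A'. i = crit a k \<and> j \<in> stable a k"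
proof -
  let ?e = "endt N a (blockSched N a A')"
  let ?R = "\<lambda>m. real (Rs N a A' m)"
  let ?P = "\<lambda>m. real (\<Sum>j\<in>{1..<m}. a j)"
  have "i < crit a (Suc N)" using ij j crit_M[of a N] by simp
  then obtain ki where ki: "ki\<in>{1..N}" "crit a ki \<le> i" "i < crit a (Suc ki)"
    using block_exists_gen[of i a N] i by auto
  have Psk: "?P (Suc ki) = ?P ki + real (a ki)"
    using Psplit[of ki a] ki(1) by (simp add: atLeastLessThanSuc_atLeastAtMost)
  have ei: "?e i \<le> ?R (Suc ki) + ?P (Suc ki)"
  proof -
    from block_cases[of ki a i] ki consider "i = crit a ki" | "i \<in> stable a ki" by auto
    then show ?thesis
    proof cases
      case 1
      then show ?thesis using E1[OF ki(1), of a A'] Rs_mono_r[of ki "Suc ki" N a A'] Psk by simp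
    next
      case 2
      then show ?thesis using E2[OF ki(1) 2, of A'] Pm_mono[of ki "Suc ki" a] by simp
    qed
  qed
  show ?thesis
  proof (cases "j = numEmp N a")
    case True
    have "?R (Suc ki) \<le> ?R (Suc N)" using ki Rs_mono_r by simp
    moreover have "(\<Sum>j\<in>{1..<Suc ki}. a j) \<le> (\<Sum>j\<in>{1..N}. a j)"
      using ki by (intro sum_mono2) auto
    then have "?P (Suc ki) \<le> real (total N a)"
      unfolding total_def by (simp only: of_nat_le_iff)
    ultimately have "?e i \<le> ?e j" using ei True E3[of N a A'] by simp
    then show ?thesis using lt by simp
  next
    case False
    then have "j < crit a (Suc N)" using j crit_M[of a N] by simp
    then obtain kj where kj: "kj\<in>{1..N}" "crit a kj \<le> j" "j < crit a (Suc kj)"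
      using block_exists_gen[of j a N] j by auto
    have "crit a ki < crit a (Suc kj)" using ki kj ij by simp
    then have kle: "ki \<le> kj" using crit_less_iff by simp
    have ej: "?R kj + ?P kj \<le> ?e j"
    proof -
      from block_cases[of kj a j] kj consider "j = crit a kj" | "j \<in> stable a kj" by auto
      then show ?thesis
      proof cases
        case 1
        then show ?thesis using E1[OF kj(1), of a A'] by simp
      next
        case 2
        then show ?thesis using E2[OF kj(1) 2, of A'] Rs_mono_r[of kj "Suc kj" N a A'] by simp
      qed
    qed
    show ?thesis
    proof (cases "ki < kj")
      case True
      have "?R (Suc ki) \<le> ?R kj" using True Rs_mono_r by simp
      moreover have "?P (Suc ki) \<le> ?P kj" using True Pm_mono[of "Suc ki" kj a] by (simp only: of_nat_le_iff Suc_le_eq)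
      ultimately have "?e i \<le> ?e j" using ei ej by simp
      then show ?thesis using lt by simp
    next
      case False
      then have eq: "kj = ki" using kle by simp
      have "j \<noteq> crit a ki" using ki ij by simp
      then have js: "j \<in> stable a ki" using block_cases[of ki a j] kj eq by auto
      have ejv: "?e j = ?R (Suc ki) + ?P ki" using E2[OF ki(1) js] by simp
      show ?thesis
      proof (cases "i = crit a ki")
        case False
        then have "i \<in> stable a ki" using block_cases[of ki a i] ki by auto
        then have "?e i = ?R (Suc ki) + ?P ki" using E2[OF ki(1)] by simp
        then show ?thesis using lt ejv by simp
      next
        case True
        have "?e i = ?R ki + ?P ki + real (a ki)" using E1[OF ki(1)] True by simp
        then have "?R (Suc ki) < ?R ki + real (a ki)" using lt ejv by simp
        then have "ki \<notin> {1..N} - A'" using Rs_Suc[of N a A' ki] by (auto split: if_splits)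
        then have "ki \<in> A'" using ki by simp
        then show ?thesis using True js by blast
      qed
    qed
  qed
qed


lemma finite_stable: "finite (stable a k)"
proof -
  have "stable a k = {crit a k <.. crit a k + a k}" unfolding stable_def by auto
  then show ?thesis by simp
qed

lemma bcount_le:
  assumes A': "A' \<subseteq> {1..N}" and i: "i \<in> {1..numEmp N a}"
  shows "bcount N a (blockSched N a A') i \<le> sum a {k\<in>A'. crit a k = i}"
proof -
  let ?e = "endt N a (blockSched N a A')"
  let ?X = "{j\<in>{1..numEmp N a}. i < j \<and> ?e j < ?e i}"
  show ?thesis
  proof (cases "?X = {}")
    case True
    then have "bcount N a (blockSched N a A') i = 0" unfolding bcount_def by (metis card.empty)
    then show ?thesis by simp
  next
    case False
    then obtain j0 where j0: "j0 \<in> {1..numEmp N a}" "i < j0" "?e j0 < ?e i" by blast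
    obtain k0 where k0: "k0 \<in> A'" "i = crit a k0" "j0 \<in> stable a k0"
      using core[OF i j0] by blast
    have sub: "?X \<subseteq> stable a k0"
    proof
      fix j assume "j \<in> ?X"
      then have "j \<in> {1..numEmp N a}" "i < j" "?e j < ?e i" by auto
      then obtain k where "k \<in> A'" "i = crit a k" "j \<in> stable a k" using core[OF i] by blast
      then show "j \<in> stable a k0" using k0 crit_eq_iff by metis
    qed
    have "card ?X \<le> a k0" using card_mono[OF finite_stable sub] card_stable by metis
    moreover have "{k\<in>A'. crit a k = i} = {k0}" using k0 crit_eq_iff by blast
    ultimately show ?thesis unfolding bcount_def by simp
  qed
qed

lemma Bval_le:
  assumes A': "A' \<subseteq> {1..N}"
  shows "Bval N a (blockSched N a A') \<le> sum a A'"
proof -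
  have "Bval N a (blockSched N a A') \<le> (\<Sum>i\<in>{1..numEmp N a}. sum a {k\<in>A'. crit a k = i})"
    unfolding Bval_def using bcount_le[OF A'] by (intro sum_mono) blast
  also have "\<dots> = sum a A'"
  proof (rule sum.group)
    show "finite A'" using A' finite_subset by blast
    show "crit a ` A' \<subseteq> {1..numEmp N a}" using A' crit_in_range by blast
  qed simp
  finally show ?thesis .
qed

theorem lemma3:
  fixes N W :: nat and a :: "nat \<Rightarrow> nat"
  assumes "N \<ge> 1"
    and "\<forall>j\<in>{1..N}. a j > 0"
    and "W > 0"
    and "W \<le> (\<Sum>j\<in>{1..N}. a j)"
  shows "\<exists>A' \<subseteq> {1..N}. optimal N a W (blockSched N a A')"
proof -
  define F where "F = {A'. A' \<subseteq> {1..N} \<and> real (sum a ({1..N}-A')) \<le> real (total N a) - real W}"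
  have finF: "finite F" unfolding F_def by (rule finite_subset[of _ "Pow {1..N}"]) auto
  have "real W \<le> real (total N a)" unfolding total_def using assms(4) by (simp only: of_nat_le_iff)
  then have "{1..N} \<in> F" unfolding F_def by simp
  then have ne: "sum a ` F \<noteq> {}" by blast
  define m where "m = Min (sum a ` F)"
  have "m \<in> sum a ` F" unfolding m_def using finF ne by (intro Min_in) auto
  then obtain A0 where A0: "A0 \<in> F" "sum a A0 = m" by blast
  have minm: "\<And>B. B \<in> F \<Longrightarrow> m \<le> sum a B" unfolding m_def using finF by (intro Min_le) auto
  have A0s: "A0 \<subseteq> {1..N}" using A0 unfolding F_def by simp
  have fe0: "feasible N a W (blockSched N a A0)"
    using A0 unfolding F_def by (intro feasible_block) simp
  have "optimal N a W (blockSched N a A0)"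
    unfolding optimal_def
  proof (intro conjI allI impI fe0)
    fix s' assume fe: "feasible N a W s'"
    define A2 where "A2 = {k\<in>{1..N}. \<forall>j\<in>stable a k. s' j < s' (crit a k) + real (a k)}"
    have A2s: "A2 \<subseteq> {1..N}" unfolding A2_def by blast
    have b1: "sum a A2 \<le> Bval N a s'"
      using Bval_ge[OF A2s, of a s'] unfolding A2_def by blast
    have h: "\<forall>k\<in>{1..N} - A2. \<exists>j\<in>stable a k. s' (crit a k) + real (a k) \<le> s' j"
      unfolding A2_def by (auto simp: not_less)
    have sM: "real (sum a ({1..N} - A2)) \<le> s' (numEmp N a)" using sM_ge[OF fe h] .
    have "numEmp N a \<in> {1..numEmp N a}" unfolding numEmp_def by simp
    then have "endt N a s' (numEmp N a) \<le> horizon N a W" using fe unfolding feasible_def by blast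
    then have "s' (numEmp N a) + real (total N a) \<le> 2 * real (total N a) - real W"
      unfolding endt_def horizon_def resp_M by simp
    then have "A2 \<in> F" unfolding F_def using A2s sM by simp
    then have "m \<le> sum a A2" using minm by blast
    then show "Bval N a (blockSched N a A0) \<le> Bval N a s'"
      using Bval_le[OF A0s, of a] A0(2) b1 by linarith
  qed
  then show ?thesis using A0s by blast
qed

end
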